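(* In the setting of the soft-label KNN classification utility, assume $N\ge\max(2,K)$ and let $H:=\sum_{j=1}^{K-1}\frac1{j+1}$ (so $H=0$ if $K=1$). Then for every $1\le i\le N$, the Shapley value $\phi_i$ satisfies $$-\frac{H}{N}-\Big(\frac{1}{\max(i,K)}-\frac1N\Big)-\frac{1}{CN}\;\le\;\phi_i\;\le\;\frac{H}{N}+\frac{1}{\max(i,K)}-\frac{1}{CN}.$$
   Context: Training data $(x_i,y_i)$, $i\in\mathcal I=\{1,\dots,N\}$, with $x_i\in\mathbb R^d$ and labels in a set of $C\ge1$ classes; test point $(x_{\mathrm{test}},y_{\mathrm{test}})$; $K\ge 1$ an integer. Indices are sorted so that $\|x_1-x_{\mathrm{test}}\|\le\dots\le\|x_N-x_{\mathrm{test}}\|$ (Euclidean norm, ties broken by index). For nonempty $S\subseteq\mathcal I$, $\pi^{(S)}(j)$ is the $j$-th smallest index in $S$. The utility is $v(\emptyset)=\frac1C$ and, for $S\ne\emptyset$, $v(S)=\frac{1}{\min(K,|S|)}\sum_{j=1}^{\min(K,|S|)}\mathbb 1[y_{\pi^{(S)}(j)}=y_{\mathrm{test}}]$. The Shapley value of $i$ is $\phi_i=\frac1N\sum_{k=1}^{N}\binom{N-1}{k-1}^{-1}\sum_{S\subseteq\mathcal I\setminus\{i\},\,|S|=k-1}\big[v(S\cup\{i\})-v(S)\big]$. *)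

theory Defs
  imports "HOL-Analysis.Analysis"
begin

(* pi^(S)(j) = j-th smallest element of S (1-based j); here 0-based via list index *)
definition kth_smallest :: "nat set \<Rightarrow> nat \<Rightarrow> nat" where
  "kth_smallest S j = sorted_list_of_set S ! (j - 1)"

(* soft-label KNN utility; C = number of classes *)
definition knn_utility :: "nat \<Rightarrow> nat \<Rightarrow> (nat \<Rightarrow> 'c) \<Rightarrow> 'c \<Rightarrow> nat set \<Rightarrow> real" where
  "knn_utility C K y ytest S =
     (if S = {} then 1 / real C
      else (1 / real (min K (card S))) *
           (\<Sum>j = 1..min K (card S). if y (kth_smallest S j) = ytest then 1 else 0))"

definition shapley :: "nat \<Rightarrow> (nat set \<Rightarrow> real) \<Rightarrow> nat \<Rightarrow> real" where
  "shapley N v i =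
     (1 / real N) * (\<Sum>k = 1..N. (1 / real ((N - 1) choose (k - 1))) *
        (\<Sum>S \<in> {S. S \<subseteq> {1..N} - {i} \<and> card S = k - 1}. v (S \<union> {i}) - v S))"

end

theory Submission
  imports Defs
begin


definition topK :: "nat \<Rightarrow> nat set \<Rightarrow> nat set" where
  "topK K S = set (take K (sorted_list_of_set S))"

lemma cnt_nth:
  assumes "finite S" "j < card S"
  shows "card {z\<in>S. z < sorted_list_of_set S ! j} = j"
proof -
  let ?xs = "sorted_list_of_set S"
  have ss: "sorted_wrt (<) ?xs" by (simp add: strict_sorted_list_of_set)
  have len: "length ?xs = card S" by simp
  have "{z\<in>S. z < ?xs ! j} = set (take j ?xs)"
  proof (intro set_eqI iffI)
    fix z assume "z \<in> {z\<in>S. z < ?xs ! j}"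
    then have zS: "z \<in> set ?xs" and lt: "z < ?xs ! j" using assms by auto
    then obtain l where l: "l < length ?xs" "?xs ! l = z" by (auto simp: in_set_conv_nth)
    have "l < j"
    proof (rule ccontr)
      assume "\<not> l < j"
      then have "j \<le> l" by simp
      then have "?xs ! j \<le> ?xs ! l"
        using ss l assms len by (metis le_eq_less_or_eq sorted_wrt_nth_less order.strict_implies_order order.refl)
      then show False using lt l by simp
    qed
    then show "z \<in> set (take j ?xs)" using l by (auto simp: in_set_conv_nth)
  next
    fix z assume "z \<in> set (take j ?xs)"
    then obtain l where l: "l < j" "?xs ! l = z" using assms len
      by (auto simp: in_set_conv_nth)
    then have "z < ?xs ! j" using ss assms len by (metis sorted_wrt_nth_less)
    moreover have "z \<in> S" using l assms len
      by (metis dual_order.strict_trans nth_mem set_sorted_list_of_set)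
    ultimately show "z \<in> {z\<in>S. z < ?xs ! j}" by simp
  qed
  moreover have "card (set (take j ?xs)) = j"
    using assms by (simp add: distinct_card)
  ultimately show ?thesis by simp
qed

lemma topK_iff:
  assumes "finite S"
  shows "x \<in> topK K S \<longleftrightarrow> x \<in> S \<and> card {z\<in>S. z < x} < K"
proof -
  let ?xs = "sorted_list_of_set S"
  have "x \<in> topK K S \<longleftrightarrow> (\<exists>j. j < card S \<and> j < K \<and> ?xs ! j = x)"
    using assms unfolding topK_def by (auto simp: in_set_conv_nth)
  also have "\<dots> \<longleftrightarrow> x \<in> S \<and> card {z\<in>S. z < x} < K"
  proof
    assume "\<exists>j. j < card S \<and> j < K \<and> ?xs ! j = x"
    then obtain j where "j < card S" "j < K" "?xs ! j = x" by blast
    then show "x \<in> S \<and> card {z\<in>S. z < x} < K"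
      using cnt_nth[OF assms] assms by (metis length_sorted_list_of_set nth_mem set_sorted_list_of_set)
  next
    assume h: "x \<in> S \<and> card {z\<in>S. z < x} < K"
    then obtain j where j: "j < length ?xs" "?xs ! j = x" using assms
      by (metis in_set_conv_nth set_sorted_list_of_set)
    then show "\<exists>j. j < card S \<and> j < K \<and> ?xs ! j = x"
      using cnt_nth[OF assms, of j] h by auto
  qed
  finally show ?thesis .
qed

lemma card_topK: "finite S \<Longrightarrow> card (topK K S) = min K (card S)"
  unfolding topK_def by (simp add: distinct_card)

lemma topK_sub: "finite S \<Longrightarrow> topK K S \<subseteq> S"
  using topK_iff by blast

lemma knn_top:
  assumes "finite S" "S \<noteq> {}"
  shows "knn_utility C K y ytest S =
     (\<Sum>x\<in>topK K S. (if y x = ytest then 1 else 0)) / real (card (topK K S))"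
proof -
  let ?xs = "sorted_list_of_set S"
  let ?m = "min K (card S)"
  let ?a = "\<lambda>x. (if y x = ytest then 1 else 0::real)"
  have "(\<Sum>j = 1..?m. ?a (kth_smallest S j)) = (\<Sum>j<?m. ?a (?xs ! j))"
    unfolding kth_smallest_def by (simp add: sum.atLeast1_atMost_eq)
  also have "\<dots> = sum_list (map ?a (take ?m ?xs))"
    by (simp add: sum_list_sum_nth min_def atLeast0LessThan)
  also have "\<dots> = (\<Sum>x\<in>topK K S. ?a x)"
    unfolding topK_def
    by (simp add: sum_list_distinct_conv_sum_set min_def take_all)
  finally show ?thesis using assms unfolding knn_utility_def
    by (simp add: card_topK)
qed



definition w :: "nat \<Rightarrow> nat \<Rightarrow> real" where
  "w n s = fact s * fact (n - 1 - s) / fact n"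

lemma w_pos: "w n s \<ge> 0" unfolding w_def by simp

lemma w_rec:
  assumes "1 \<le> n" "s \<le> n - 1"
  shows "w n s = w (Suc n) s + w (Suc n) (Suc s)"
proof -
  obtain d where d: "n - 1 - s = d" by blast
  have n1: "Suc n - 1 - s = Suc d" using assms d by simp
  have n2: "Suc n - 1 - Suc s = d" using assms d by simp
  have nn: "n = s + d + 1" using assms d by simp
  have key: "\<And>a b F. F > 0 \<Longrightarrow> a * b / ((real s + real d + 1) * F) =
     a * ((real d + 1) * b) / ((real s + real d + 2) * ((real s + real d + 1) * F)) +
     (real s + 1) * a * b / ((real s + real d + 2) * ((real s + real d + 1) * F))"
    by (simp add: divide_simps) (simp add: algebra_simps)
  have f1: "(fact (Suc d) :: real) = (real d + 1) * fact d" by (simp add: fact_Suc)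
  have f2: "(fact (Suc s) :: real) = (real s + 1) * fact s" by (simp add: fact_Suc)
  have f3: "(fact (Suc (s + d)) :: real) = (real s + real d + 1) * fact (s + d)" by (simp add: fact_Suc)
  have f4: "(fact (Suc (Suc (s + d))) :: real) = (real s + real d + 2) * ((real s + real d + 1) * fact (s + d))"
    by (simp add: fact_Suc algebra_simps)
  show ?thesis unfolding w_def d n1 n2 unfolding nn
    by (simp only: f1 f2 f3 f4 Suc_eq_plus1[symmetric] key[OF fact_gt_zero])
qed

lemma w_choose:
  assumes "1 \<le> n" "s \<le> n - 1"
  shows "real ((n - 1) choose s) * w n s = 1 / real n"
proof -
  have "fact s * fact (n - 1 - s) * ((n - 1) choose s) = (fact (n - 1) :: nat)"
    using binomial_fact_lemma[of s "n-1"] assms by simp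
  then have e: "real (fact s) * real (fact (n - 1 - s)) * real ((n - 1) choose s) = fact (n - 1)"
    by (metis of_nat_fact of_nat_mult)
  have f: "(fact n :: real) = real n * fact (n - 1)"
    using assms fact_Suc[of "n-1"] by (simp add: Suc_diff_le)
  show ?thesis
  proof -
    have "real ((n - 1) choose s) * (fact s * fact (n - 1 - s) / (real n * fact (n - 1)))
      = (real (fact s) * real (fact (n - 1 - s)) * real ((n - 1) choose s)) / (real n * fact (n - 1))"
      by (simp add: field_simps)
    also have "\<dots> = 1 / real n" unfolding e by simp
    finally show ?thesis by (simp add: w_def f)
  qed
qed

lemma sum_Pow_group:
  assumes "finite U"
  shows "(\<Sum>S\<in>Pow U. h S) = (\<Sum>t=0..card U. \<Sum>S\<in>{S. S \<subseteq> U \<and> card S = t}. h S)"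
proof -
  have "(\<Sum>t=0..card U. \<Sum>S\<in>{S\<in>Pow U. card S = t}. h S) = (\<Sum>S\<in>Pow U. h S)"
    by (rule sum.group) (use assms in \<open>auto intro: card_mono\<close>)
  moreover have "\<And>t. {S\<in>Pow U. card S = t} = {S. S \<subseteq> U \<and> card S = t}" by auto
  ultimately show ?thesis by simp
qed

lemma sum_Pow_card:
  assumes "finite U"
  shows "(\<Sum>S\<in>Pow U. f (card S)) = (\<Sum>t=0..card U. real (card U choose t) * f t)"
proof -
  have "(\<Sum>S\<in>Pow U. f (card S)) = (\<Sum>t=0..card U. \<Sum>S\<in>{S. S \<subseteq> U \<and> card S = t}. f (card S))"
    by (rule sum_Pow_group[OF assms])
  also have "\<dots> = (\<Sum>t=0..card U. \<Sum>S\<in>{S. S \<subseteq> U \<and> card S = t}. f t)"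
    by (intro sum.cong) auto
  also have "\<dots> = (\<Sum>t=0..card U. real (card U choose t) * f t)"
    using n_subsets[OF assms] by simp
  finally show ?thesis .
qed

lemma weight_marg:
  assumes "finite A" "finite B" "A \<inter> B = {}"
  shows "(\<Sum>S\<in>Pow (A \<union> B). w (card A + card B + 1) (card S) * f (S \<inter> A))
       = (\<Sum>T\<in>Pow A. w (card A + 1) (card T) * f T)"
  using assms(2,3)
proof (induction B rule: finite_induct)
  case empty
  show ?case by (intro sum.cong) (auto simp: Int_absorb2)
next
  case (insert b B)
  let ?n = "card A + card B + 1"
  have bA: "b \<notin> A \<union> B" using insert by auto
  have fin: "finite (Pow (A \<union> B))" using assms insert by simp
  have "(\<Sum>S\<in>Pow (A \<union> insert b B). w (card A + card (insert b B) + 1) (card S) * f (S \<inter> A))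
     = (\<Sum>S\<in>Pow (A \<union> B) \<union> insert b ` Pow (A \<union> B). w (Suc ?n) (card S) * f (S \<inter> A))"
    using insert by (simp add: Pow_insert)
  also have "\<dots> = (\<Sum>S\<in>Pow (A \<union> B). w (Suc ?n) (card S) * f (S \<inter> A))
      + (\<Sum>S\<in>insert b ` Pow (A \<union> B). w (Suc ?n) (card S) * f (S \<inter> A))"
    by (rule sum.union_disjoint) (use fin bA in auto)
  also have "(\<Sum>S\<in>insert b ` Pow (A \<union> B). w (Suc ?n) (card S) * f (S \<inter> A))
      = (\<Sum>S\<in>Pow (A \<union> B). w (Suc ?n) (Suc (card S)) * f (S \<inter> A))"
  proof (subst sum.reindex)
    show "inj_on (insert b) (Pow (A \<union> B))" using bA
      by (intro inj_onI) (metis PowD insert_ident subset_iff)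
    show "(\<Sum>S\<in>Pow (A \<union> B). ((\<lambda>S. w (Suc ?n) (card S) * f (S \<inter> A)) \<circ> insert b) S)
        = (\<Sum>S\<in>Pow (A \<union> B). w (Suc ?n) (Suc (card S)) * f (S \<inter> A))"
    proof (intro sum.cong refl)
      fix S assume "S \<in> Pow (A \<union> B)"
      then have "b \<notin> S" "finite S" using bA assms insert by (auto intro: finite_subset)
      moreover have "insert b S \<inter> A = S \<inter> A" using insert by auto
      ultimately show "((\<lambda>S. w (Suc ?n) (card S) * f (S \<inter> A)) \<circ> insert b) S
          = w (Suc ?n) (Suc (card S)) * f (S \<inter> A)" by simp
    qed
  qed
  also have "(\<Sum>S\<in>Pow (A \<union> B). w (Suc ?n) (card S) * f (S \<inter> A))
      + (\<Sum>S\<in>Pow (A \<union> B). w (Suc ?n) (Suc (card S)) * f (S \<inter> A))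
      = (\<Sum>S\<in>Pow (A \<union> B). w ?n (card S) * f (S \<inter> A))"
  proof -
    have "\<And>S. S \<in> Pow (A \<union> B) \<Longrightarrow> w ?n (card S) = w (Suc ?n) (card S) + w (Suc ?n) (Suc (card S))"
    proof -
      fix S assume "S \<in> Pow (A \<union> B)"
      then have "card S \<le> card (A \<union> B)" using assms insert by (auto intro: card_mono)
      also have "\<dots> \<le> card A + card B" by (rule card_Un_le)
      finally show "w ?n (card S) = w (Suc ?n) (card S) + w (Suc ?n) (Suc (card S))"
        by (intro w_rec) auto
    qed
    then show ?thesis by (simp add: sum.distrib[symmetric] distrib_right)
  qed
  also have "\<dots> = (\<Sum>T\<in>Pow A. w (card A + 1) (card T) * f T)" by (rule insert.IH) (use insert in auto)
  finally show ?case .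
qed



lemma sum01:
  fixes a :: "nat \<Rightarrow> real"
  assumes "finite D" "\<And>x. 0 \<le> a x" "\<And>x. a x \<le> 1"
  shows "0 \<le> sum a D" "sum a D \<le> real (card D)"
  using assms sum_bounded_above[of D a 1] by (auto intro: sum_nonneg)

lemma delta_bound:
  assumes fin: "finite S" and ne: "S \<noteq> {}" and iS: "i \<notin> S" and K1: "K \<ge> 1"
  shows "\<bar>knn_utility C K y ytest (S \<union> {i}) - knn_utility C K y ytest S\<bar>
     \<le> (if card S < K then 1 / (real (card S) + 1)
        else if card {z\<in>S. z < i} < K then 1 / real K else 0)"
proof -
  define a where "a x = (if y x = ytest then 1 else 0::real)" for x
  have a01: "0 \<le> a x" "a x \<le> 1" for x by (auto simp: a_def)
  let ?S' = "insert i S"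
  have finS': "finite ?S'" using fin by simp
  have vS: "knn_utility C K y ytest S = sum a (topK K S) / real (card (topK K S))"
    using knn_top[OF fin ne] by (simp add: a_def)
  have vS': "knn_utility C K y ytest (S \<union> {i}) = sum a (topK K ?S') / real (card (topK K ?S'))"
    using knn_top[OF finS'] by (simp add: a_def)
  have cS': "card ?S' = card S + 1" using fin iS by simp
  show ?thesis
  proof (cases "card S < K")
    case True
    have t1: "topK K S = S"
    proof -
      have "x \<in> topK K S" if "x \<in> S" for x
      proof -
        have "card {z\<in>S. z < x} \<le> card S" using fin by (intro card_mono) auto
        then show ?thesis using topK_iff[OF fin] that True by auto
      qed
      then show ?thesis using topK_sub[OF fin] by blast
    qed
    have t2: "topK K ?S' = ?S'"
    proof -
      have "x \<in> topK K ?S'" if "x \<in> ?S'" for x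
      proof -
        have "card {z\<in>?S'. z < x} \<le> card (?S' - {x})" using fin by (intro card_mono) auto
        also have "\<dots> = card S" using that cS' fin by simp
        finally show ?thesis using topK_iff[OF finS'] that True by auto
      qed
      then show ?thesis using topK_sub[OF finS'] by blast
    qed
    define s where "s = real (card S)"
    define A where "A = sum a S"
    have s1: "s \<ge> 1" using fin ne unfolding s_def by (simp add: Suc_leI card_gt_0_iff)
    have A: "0 \<le> A" "A \<le> s" using sum01[of S a] fin a01 unfolding A_def s_def by auto
    have eq: "knn_utility C K y ytest (S \<union> {i}) - knn_utility C K y ytest S
       = (a i + A) / (s + 1) - A / s"
      unfolding vS vS' t1 t2 using fin iS cS' by (simp add: A_def s_def)
    have b: "0 \<le> a i" "a i \<le> 1" using a01 by auto
    have "(a i + A) / (s + 1) - A / s = (s * a i - A) / (s * (s + 1))"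
      using s1 by (simp add: field_simps)
    moreover have "\<bar>s * a i - A\<bar> \<le> s"
    proof -
      have "s * a i \<le> s" using b s1 mult_left_le[of "a i" s] by simp
      moreover have "0 \<le> s * a i" using b s1 by simp
      ultimately show ?thesis using A by (simp add: abs_le_iff)
    qed
    ultimately have "\<bar>(a i + A) / (s + 1) - A / s\<bar> \<le> s / (s * (s + 1))"
    proof -
      assume e1: "(a i + A) / (s + 1) - A / s = (s * a i - A) / (s * (s + 1))"
        and e2: "\<bar>s * a i - A\<bar> \<le> s"
      have "\<bar>(a i + A) / (s + 1) - A / s\<bar> = \<bar>s * a i - A\<bar> / (s * (s + 1))"
        unfolding e1 using s1 by (simp add: abs_divide)
      also have "\<dots> \<le> s / (s * (s + 1))" using e2 s1 by (intro divide_right_mono) auto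
      finally show ?thesis .
    qed
    also have "\<dots> = 1 / (s + 1)" using s1 by simp
    finally show ?thesis using True eq by (simp add: s_def)
  next
    case False
    have cT: "card (topK K S) = K" "card (topK K ?S') = K"
      using card_topK[OF fin] card_topK[OF finS'] False cS' by auto
    define D1 where "D1 = topK K ?S' - topK K S"
    define D2 where "D2 = topK K S - topK K ?S'"
    have finT: "finite (topK K S)" "finite (topK K ?S')"
      using topK_sub fin finS' finite_subset by blast+
    have "card D1 = K - card (topK K ?S' \<inter> topK K S)"
      unfolding D1_def using finT cT by (simp add: card_Diff_subset_Int)
    moreover have "card D2 = K - card (topK K ?S' \<inter> topK K S)"
      unfolding D2_def using finT cT by (simp add: card_Diff_subset_Int Int_commute)
    ultimately have cD: "card D2 = card D1" by simp
    have cnt: "card {z\<in>?S'. z < i} = card {z\<in>S. z < i}"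
      by (rule arg_cong[where f=card]) auto
    have D1sub: "D1 \<subseteq> (if card {z\<in>S. z < i} < K then {i} else {})"
    proof
      fix x assume x: "x \<in> D1"
      then have xT: "x \<in> ?S'" "card {z\<in>?S'. z < x} < K" "x \<notin> topK K S"
        unfolding D1_def using topK_iff[OF finS'] by auto
      show "x \<in> (if card {z\<in>S. z < i} < K then {i} else {})"
      proof (cases "x = i")
        case True then show ?thesis using xT cnt by simp
      next
        case False
        then have "x \<in> S" using xT by simp
        moreover have "card {z\<in>S. z < x} \<le> card {z\<in>?S'. z < x}"
          using finS' by (intro card_mono) auto
        ultimately have "x \<in> topK K S" using xT topK_iff[OF fin] by auto
        then show ?thesis using xT by simp
      qed
    qed
    have cD1: "real (card D1) \<le> (if card {z\<in>S. z < i} < K then 1 else 0)"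
      using card_mono[OF _ D1sub] by (auto split: if_splits)
    have finD: "finite D1" "finite D2" unfolding D1_def D2_def using finT by auto
    have sums: "sum a (topK K ?S') - sum a (topK K S) = sum a D1 - sum a D2"
      using sum.Int_Diff[OF finT(2), of a "topK K S"] sum.Int_Diff[OF finT(1), of a "topK K ?S'"]
      unfolding D1_def D2_def by (simp add: Int_commute)
    have "\<bar>sum a D1 - sum a D2\<bar> \<le> real (card D1)"
    proof -
      have "0 \<le> sum a D1" "sum a D1 \<le> real (card D1)" using sum01[of D1 a] finD a01 by auto
      moreover have "0 \<le> sum a D2" "sum a D2 \<le> real (card D2)" using sum01[of D2 a] finD a01 by auto
      ultimately show ?thesis using cD by auto
    qed
    also have "\<dots> \<le> (if card {z\<in>S. z < i} < K then 1 else 0)" by (rule cD1)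
    finally have h: "\<bar>sum a D1 - sum a D2\<bar> \<le> (if card {z\<in>S. z < i} < K then 1 else 0)" .
    have Kp: "real K > 0" using K1 by simp
    have "\<bar>knn_utility C K y ytest (S \<union> {i}) - knn_utility C K y ytest S\<bar>
        = \<bar>sum a D1 - sum a D2\<bar> / real K"
      unfolding vS vS' cT sums[symmetric] by (simp add: diff_divide_distrib[symmetric] abs_divide)
    also have "\<dots> \<le> (if card {z\<in>S. z < i} < K then 1 else 0) / real K"
      using h Kp by (simp add: divide_right_mono)
    finally have "\<bar>knn_utility C K y ytest (S \<union> {i}) - knn_utility C K y ytest S\<bar>
        \<le> (if card {z\<in>S. z < i} < K then 1 / real K else 0)" by (simp split: if_splits)
    then show ?thesis using False by simp
  qed
qed



lemma card_filter_lt: "card ({0..n} \<inter> {..<K}) = min K (Suc n)"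
proof -
  have "{0..n} \<inter> {..<K} = {..<min K (Suc n)}" by auto
  then show ?thesis by simp
qed

lemma sum_Pow_lt:
  assumes "finite U" "card U = n - 1" "1 \<le> n"
  shows "(\<Sum>S\<in>Pow U. w n (card S) * (if card S < K then 1 else 0)) = real (min K n) / real n"
proof -
  have "(\<Sum>S\<in>Pow U. w n (card S) * (if card S < K then 1 else 0))
     = (\<Sum>t=0..n-1. real ((n-1) choose t) * (w n t * (if t < K then 1 else 0)))"
    using sum_Pow_card[OF assms(1), of "\<lambda>t. w n t * (if t < K then 1 else 0)"] assms(2) by simp
  also have "\<dots> = (\<Sum>t=0..n-1. (if t < K then 1 / real n else 0))"
    using w_choose assms(3) by (intro sum.cong) (auto simp: mult.assoc[symmetric])
  also have "\<dots> = (\<Sum>t=0..n-1. (if t \<in> {..<K} then 1 / real n else 0))" by simp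
  also have "\<dots> = (\<Sum>t\<in>{0..n-1} \<inter> {..<K}. 1 / real n)"
    by (rule sum.inter_restrict[symmetric]) simp
  also have "\<dots> = real (min K n) / real n"
    using card_filter_lt[of "n-1" K] assms(3) by simp
  finally show ?thesis .
qed

lemma shapley_Pow:
  assumes "1 \<le> i" "i \<le> N"
  shows "shapley N v i = (\<Sum>S\<in>Pow ({1..N} - {i}). w N (card S) * (v (S \<union> {i}) - v S))"
proof -
  let ?U = "{1..N} - {i}"
  let ?F = "\<lambda>t. {S. S \<subseteq> ?U \<and> card S = t}"
  let ?D = "\<lambda>S. v (S \<union> {i}) - v S"
  have fU: "finite ?U" by simp
  have cU: "card ?U = N - 1" using assms by simp
  have N1: "1 \<le> N" using assms by simp
  have "shapley N v i = (\<Sum>k = 1..N. \<Sum>S\<in>?F (k - 1). w N (k - 1) * ?D S)"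
    unfolding shapley_def sum_distrib_left[of "1 / real N"]
  proof (intro sum.cong refl)
    fix k assume k: "k \<in> {1..N}"
    have "1 / real N * (1 / real ((N - 1) choose (k - 1))) = w N (k - 1)"
    proof -
      have c: "real ((N - 1) choose (k - 1)) * w N (k - 1) = 1 / real N"
        using w_choose[of N "k-1"] k by auto
      have p: "real ((N - 1) choose (k - 1)) \<noteq> 0" using k by auto
      have "w N (k - 1) = (1 / real N) / real ((N - 1) choose (k - 1))"
        using c p by (metis nonzero_mult_div_cancel_left)
      then show ?thesis by simp
    qed
    note eqw = this
    show "1 / real N * (1 / real ((N - 1) choose (k - 1)) * sum ?D (?F (k - 1)))
        = (\<Sum>S\<in>?F (k - 1). w N (k - 1) * ?D S)"
      by (simp only: mult.assoc[symmetric] eqw sum_distrib_left)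
  qed
  also have "\<dots> = (\<Sum>t<N. \<Sum>S\<in>?F t. w N t * ?D S)"
    by (simp add: sum.atLeast1_atMost_eq)
  also have "\<dots> = (\<Sum>t=0..card ?U. \<Sum>S\<in>?F t. w N (card S) * ?D S)"
  proof -
    have e: "{..<N} = {0..card ?U}" using cU N1 by auto
    show ?thesis unfolding e by (intro sum.cong refl) auto
  qed
  also have "\<dots> = (\<Sum>S\<in>Pow ?U. w N (card S) * ?D S)"
    by (rule sum_Pow_group[OF fU, symmetric])
  finally show ?thesis .
qed



theorem mainTheorem5:
  fixes N K C :: nat
    and x :: "nat \<Rightarrow> 'a::euclidean_space" and xtest :: "'a"
    and y :: "nat \<Rightarrow> 'c" and ytest :: 'c
    and L :: "'c set"
    and i :: nat
  assumes "finite L" and "card L = C" and "C \<ge> 1"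
    and "\<And>j. j \<in> {1..N} \<Longrightarrow> y j \<in> L" and "ytest \<in> L"
    and "K \<ge> 1"
    and "N \<ge> max 2 K"
    and sorted: "\<And>j l. 1 \<le> j \<Longrightarrow> j \<le> l \<Longrightarrow> l \<le> N \<Longrightarrow>
                   norm (x j - xtest) \<le> norm (x l - xtest)"
    and "1 \<le> i" and "i \<le> N"
  shows "let H = (\<Sum>j = 1..K - 1. 1 / real (j + 1));
             \<phi> = shapley N (knn_utility C K y ytest) i
         in - H / real N - (1 / real (max i K) - 1 / real N) - 1 / (real C * real N) \<le> \<phi>
            \<and> \<phi> \<le> H / real N + 1 / real (max i K) - 1 / (real C * real N)"
proof -
  note K1 = \<open>K \<ge> 1\<close> and i1 = \<open>1 \<le> i\<close> and iN = \<open>i \<le> N\<close>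
  have KN: "K \<le> N" and N2: "2 \<le> N" using \<open>N \<ge> max 2 K\<close> by auto
  define H where "H = (\<Sum>j = 1..K - 1. 1 / real (j + 1))"
  define v where "v = knn_utility C K y ytest"
  define U where "U = {1..N} - {i}"
  define A where "A = U \<inter> {..<i}"
  define B where "B = U - A"
  define D where "D S = v (S \<union> {i}) - v S" for S
  define g1 where "g1 S = (if 0 < card S \<and> card S < K then 1 / (real (card S) + 1) else 0)" for S :: "nat set"
  define g2 where "g2 S = (if K \<le> card S \<and> card (S \<inter> A) < K then 1 / real K else 0)" for S
  have fU: "finite U" unfolding U_def by simp
  have cU: "card U = N - 1" unfolding U_def using i1 iN by simp
  have iU: "i \<notin> U" unfolding U_def by simp
  have phi: "shapley N v i = (\<Sum>S\<in>Pow U. w N (card S) * D S)"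
    unfolding U_def D_def by (rule shapley_Pow[OF i1 iN])
  have PU: "Pow U = insert {} (Pow U - {{}})" by auto
  have fP: "finite (Pow U - {{}})" using fU by simp
  have split: "(\<Sum>S\<in>Pow U. w N (card S) * D S) = w N 0 * D {} + (\<Sum>S\<in>Pow U - {{}}. w N (card S) * D S)"
    by (subst PU, subst sum.insert) (use fP in auto)
  have w0: "w N 0 = 1 / real N" using w_choose[of N 0] N2 by simp
  have vi: "0 \<le> v {i}" "v {i} \<le> 1"
  proof -
    have em: "{z\<in>{i}. z < i} = {}" by auto
    have "i \<in> topK K {i}" using topK_iff[of "{i}" i K] K1 unfolding em by simp
    then have t: "topK K {i} = {i}" using topK_sub[of "{i}" K] by blast
    have "v {i} = (if y i = ytest then 1 else 0)" unfolding v_def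
      using knn_top[of "{i}" C K y ytest] t by simp
    then show "0 \<le> v {i}" "v {i} \<le> 1" by auto
  qed
  have D0: "D {} = v {i} - 1 / real C" unfolding D_def v_def by (simp add: knn_utility_def)
  have bnd: "\<bar>w N (card S) * D S\<bar> \<le> w N (card S) * (g1 S + g2 S)" if S: "S \<in> Pow U - {{}}" for S
  proof -
    have fS: "finite S" using S fU finite_subset by blast
    have iS: "i \<notin> S" using S iU by auto
    have eqc: "{z\<in>S. z < i} = S \<inter> A" using S unfolding A_def by auto
    have "\<bar>D S\<bar> \<le> g1 S + g2 S"
      using delta_bound[OF fS _ iS K1, of C y ytest] S fS
      unfolding D_def v_def g1_def g2_def eqc by (auto simp: card_gt_0_iff)
    then show ?thesis using w_pos[of N "card S"] by (simp add: abs_mult mult_left_mono)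
  qed
  have R: "\<bar>\<Sum>S\<in>Pow U - {{}}. w N (card S) * D S\<bar> \<le> (\<Sum>S\<in>Pow U. w N (card S) * (g1 S + g2 S))"
  proof -
    have "\<bar>\<Sum>S\<in>Pow U - {{}}. w N (card S) * D S\<bar> \<le> (\<Sum>S\<in>Pow U - {{}}. \<bar>w N (card S) * D S\<bar>)"
      by (rule sum_abs)
    also have "\<dots> \<le> (\<Sum>S\<in>Pow U - {{}}. w N (card S) * (g1 S + g2 S))"
      by (rule sum_mono) (rule bnd)
    also have "\<dots> \<le> (\<Sum>S\<in>Pow U. w N (card S) * (g1 S + g2 S))"
      by (rule sum_mono2) (use fU w_pos in \<open>auto simp: g1_def g2_def\<close>)
    finally show ?thesis .
  qed
  have S1: "(\<Sum>S\<in>Pow U. w N (card S) * g1 S) = H / real N"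
  proof -
    have "(\<Sum>S\<in>Pow U. w N (card S) * g1 S)
      = (\<Sum>t=0..N-1. real ((N-1) choose t) * (w N t * (if 0 < t \<and> t < K then 1 / (real t + 1) else 0)))"
      using sum_Pow_card[OF fU, of "\<lambda>t. w N t * (if 0 < t \<and> t < K then 1 / (real t + 1) else 0)"] cU
      unfolding g1_def by simp
    also have "\<dots> = (\<Sum>t=0..N-1. (if t \<in> {1..K-1} then 1 / real N * (1 / (real t + 1)) else 0))"
      using w_choose[of N] N2 by (intro sum.cong refl) (auto simp: mult.assoc[symmetric])
    also have "\<dots> = (\<Sum>t\<in>{0..N-1} \<inter> {1..K-1}. 1 / real N * (1 / (real t + 1)))"
      by (rule sum.inter_restrict[symmetric]) simp
    also have "{0..N-1} \<inter> {1..K-1} = {1..K-1}" using KN by auto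
    also have "(\<Sum>t\<in>{1..K-1}. 1 / real N * (1 / (real t + 1))) = H / real N"
      unfolding H_def sum_distrib_left[symmetric] by (simp add: add.commute)
    finally show ?thesis .
  qed
  have S2: "(\<Sum>S\<in>Pow U. w N (card S) * g2 S) = 1 / real (max i K) - 1 / real N"
  proof -
    let ?fA = "\<lambda>T. (if card T < K then 1 else 0::real)"
    have g2e: "w N (card S) * g2 S = 1 / real K * (w N (card S) * ?fA (S \<inter> A) - w N (card S) * ?fA S)"
      if "S \<in> Pow U" for S
    proof -
      have "card (S \<inter> A) \<le> card S" using that fU by (intro card_mono) (auto intro: finite_subset)
      then show ?thesis unfolding g2_def by (auto simp: algebra_simps)
    qed
    have AB: "A \<union> B = U" "A \<inter> B = {}" unfolding A_def B_def by auto
    have Aeq: "A = {1..<i}" unfolding A_def U_def using iN by auto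
    have cA: "card A = i - 1" unfolding Aeq by simp
    have fA: "finite A" "finite B" using fU unfolding A_def B_def by auto
    have cB: "card B = N - i" unfolding B_def using fU cU cA card_Diff_subset[of A U] A_def i1
      by (simp add: Int_lower1)
    have n1: "card A + card B + 1 = N" using cA cB i1 iN by simp
    have n2: "card A + 1 = i" using cA i1 by simp
    have first: "(\<Sum>S\<in>Pow U. w N (card S) * ?fA (S \<inter> A)) = real (min K i) / real i"
      using weight_marg[OF fA AB(2), of ?fA] sum_Pow_lt[OF fA(1) cA i1, of K]
      unfolding AB(1) n1 n2 by simp
    have second: "(\<Sum>S\<in>Pow U. w N (card S) * ?fA S) = real K / real N"
      using sum_Pow_lt[OF fU cU, of K] N2 KN by (simp add: min_def)
    have "(\<Sum>S\<in>Pow U. w N (card S) * g2 S) = 1 / real K * (real (min K i) / real i - real K / real N)"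
    proof -
      have "(\<Sum>S\<in>Pow U. w N (card S) * g2 S) = (\<Sum>S\<in>Pow U. 1 / real K * (w N (card S) * ?fA (S \<inter> A) - w N (card S) * ?fA S))"
        using g2e by (rule sum.cong[OF refl])
      also have "\<dots> = 1 / real K * ((\<Sum>S\<in>Pow U. w N (card S) * ?fA (S \<inter> A)) - (\<Sum>S\<in>Pow U. w N (card S) * ?fA S))"
        by (simp only: sum_distrib_left[symmetric] sum_subtractf)
      finally show ?thesis unfolding first second .
    qed
    also have "\<dots> = 1 / real (max i K) - 1 / real N"
    proof (cases "i \<le> K")
      case True then show ?thesis using K1 i1 by (simp add: max_def min_def field_simps)
    next
      case False then show ?thesis using K1 i1 by (simp add: max_def min_def field_simps)
    qed
    finally show ?thesis .
  qed
  have Rb: "\<bar>\<Sum>S\<in>Pow U - {{}}. w N (card S) * D S\<bar> \<le> H / real N + (1 / real (max i K) - 1 / real N)"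
    using R S1 S2 by (simp add: distrib_left sum.distrib)
  have e: "shapley N v i = (v {i} - 1 / real C) / real N + (\<Sum>S\<in>Pow U - {{}}. w N (card S) * D S)"
    unfolding phi split w0 D0 by simp
  have C0: "real C > 0" using \<open>C \<ge> 1\<close> by simp
  have N0: "real N > 0" using N2 by simp
  have a1: "(v {i} - 1 / real C) / real N \<ge> - 1 / (real C * real N)"
    using vi C0 N0 by (simp add: divide_simps)
  have a2: "(v {i} - 1 / real C) / real N \<le> 1 / real N - 1 / (real C * real N)"
    using vi C0 N0 by (simp add: divide_simps)
  show ?thesis unfolding Let_def H_def[symmetric] v_def[symmetric]
    using e a1 a2 Rb by (simp add: abs_le_iff)
qed


end
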